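(* Let $F$ be an algebraically closed field with $\mathrm{char}\,F=2$. Then the maximal Mathieu subspaces of $M_2(F)$ are exactly the following: (i) the $2$-dimensional subspaces $V\subseteq I_2^\perp=\{b\in M_2(F):\mathrm{Tr}(b)=0\}$ with $I_2\notin V$; (ii) the subspaces $F(\lambda_1e_1+\lambda_2e_2)+e_1M_2(F)e_2$, where $e_1,e_2$ are nonzero idempotents with $e_1+e_2=I_2$ and $\lambda_1,\lambda_2\in F$ are distinct, nonzero, with $\lambda_1+\lambda_2\ne0$.
   Context: Let $\mathcal A$ be an associative algebra over a field $F$. An $F$-subspace $M\subseteq\mathcal A$ is a Mathieu subspace (MS) of $\mathcal A$ if for all $a,b,c\in\mathcal A$ such that $a^m\in M$ for all $m\ge 1$, there exists $N$ (depending on $a,b,c$) such that $ba^mc\in M$ for all $m\ge N$. A maximal MS of $\mathcal A$ is a proper MS of $\mathcal A$ that is not properly contained in any proper MS of $\mathcal A$. *)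

theory Defs
  imports "HOL-Analysis.Analysis" "HOL-Computational_Algebra.Polynomial"
begin

definition msmult :: "'a::field \<Rightarrow> 'a^2^2 \<Rightarrow> 'a^2^2" where
  "msmult c A = (\<chi> i j. c * A $ i $ j)"

lemma vector_space_msmult: "vector_space (msmult :: 'a::field \<Rightarrow> 'a^2^2 \<Rightarrow> 'a^2^2)"
  by unfold_locales (simp_all add: msmult_def vec_eq_iff algebra_simps)

text \<open>Matrix powers (the componentwise power on vec types is NOT the matrix power).\<close>
primrec mpow :: "'a::field^2^2 \<Rightarrow> nat \<Rightarrow> 'a^2^2" where
  "mpow a 0 = mat 1"
| "mpow a (Suc m) = mpow a m ** a"

definition F_subspace :: "('a::field^2^2) set \<Rightarrow> bool" where
  "F_subspace M \<longleftrightarrow> module.subspace msmult M"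

definition Mathieu_subspace :: "('a::field^2^2) set \<Rightarrow> bool" where
  "Mathieu_subspace M \<longleftrightarrow> F_subspace M \<and>
     (\<forall>a b c. (\<forall>m\<ge>1. mpow a m \<in> M) \<longrightarrow> (\<exists>N. \<forall>m\<ge>N. b ** mpow a m ** c \<in> M))"

definition maximal_Mathieu_subspace :: "('a::field^2^2) set \<Rightarrow> bool" where
  "maximal_Mathieu_subspace M \<longleftrightarrow> Mathieu_subspace M \<and> M \<noteq> UNIV \<and>
     (\<forall>M'. Mathieu_subspace M' \<and> M' \<noteq> UNIV \<and> M \<subseteq> M' \<longrightarrow> M' = M)"

definition idempotent_mat :: "'a::field^2^2 \<Rightarrow> bool" where
  "idempotent_mat e \<longleftrightarrow> e ** e = e"

end

theory Submission
  imports Defs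
begin


definition mk :: "'a::field \<Rightarrow> 'a \<Rightarrow> 'a \<Rightarrow> 'a \<Rightarrow> 'a^2^2" where
  "mk a b c d = (\<chi> i j. if i = 1 then (if j = 1 then a else b) else (if j = 1 then c else d))"

lemma two_ne_one2: "(2::2) \<noteq> 1" by simp

lemma mk_nth[simp]: "mk a b c d $ 1 $ 1 = a" "mk a b c d $ 1 $ 2 = b"
  "mk a b c d $ 2 $ 1 = c" "mk a b c d $ 2 $ 2 = d"
  by (simp_all add: mk_def)

lemma mk_eta: "A = mk (A$1$1) (A$1$2) (A$2$1) (A$2$2)"
  by (simp add: vec_eq_iff forall_2)

lemma mk_cases: obtains a b c d where "A = mk a b c d"
  using mk_eta by blast

lemma mk_eq[simp]: "mk a b c d = mk a' b' c' d' \<longleftrightarrow> a = a' \<and> b = b' \<and> c = c' \<and> d = d'"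
  by (simp add: vec_eq_iff forall_2)

lemma mk_mult[simp]: "mk a b c d ** mk a' b' c' d' = mk (a*a'+b*c') (a*b'+b*d') (c*a'+d*c') (c*b'+d*d')"
  by (simp add: vec_eq_iff forall_2 matrix_matrix_mult_def sum_2)

lemma mk_add[simp]: "mk a b c d + mk a' b' c' d' = mk (a+a') (b+b') (c+c') (d+d')"
  by (simp add: vec_eq_iff forall_2)

lemma mk_diff[simp]: "mk a b c d - mk a' b' c' d' = mk (a-a') (b-b') (c-c') (d-d')"
  by (simp add: vec_eq_iff forall_2)

lemma mk_smult[simp]: "msmult k (mk a b c d) = mk (k*a) (k*b) (k*c) (k*d)"
  by (simp add: vec_eq_iff forall_2 msmult_def)

lemma mk_zero: "(0::'a::field^2^2) = mk 0 0 0 0"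
  by (simp add: vec_eq_iff forall_2)

lemma mk_one: "(mat 1::'a::field^2^2) = mk 1 0 0 1"
  by (simp add: vec_eq_iff forall_2 mat_def)

lemma mk_trace[simp]: "trace (mk a b c d) = a + d"
  by (simp add: trace_def sum_2)

definition "Bas = {mk 1 0 0 0, mk 0 1 0 0, mk 0 0 1 0, mk (0::'a::field) 0 0 1}"

lemma msmult_zero_eq: "msmult (k::'a::field) 0 = 0" by (simp add: mk_zero)

interpretation FD: finite_dimensional_vector_space "msmult :: 'a::field \<Rightarrow> 'a^2^2 \<Rightarrow> 'a^2^2" Bas
proof -
  interpret vector_space "msmult :: 'a::field \<Rightarrow> 'a^2^2 \<Rightarrow> 'a^2^2" by (rule vector_space_msmult)
  show "finite_dimensional_vector_space (msmult :: 'a::field \<Rightarrow> 'a^2^2 \<Rightarrow> 'a^2^2) Bas"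
  proof
    show "finite (Bas :: ('a^2^2) set)" by (simp add: Bas_def)
    show "independent (Bas :: ('a^2^2) set)"
    proof (rule independent_if_scalars_zero)
      show "finite (Bas :: ('a^2^2) set)" by (simp add: Bas_def)
      fix f :: "'a^2^2 \<Rightarrow> 'a" and x :: "'a^2^2"
      assume s: "(\<Sum>x\<in>Bas. msmult (f x) x) = 0" and x: "x \<in> Bas"
      have "(\<Sum>x\<in>Bas. msmult (f x) x) = mk (f (mk 1 0 0 0)) (f (mk 0 1 0 0)) (f (mk 0 0 1 0)) (f (mk 0 0 0 1))"
        by (simp add: Bas_def)
      with s x show "f x = 0" by (auto simp: Bas_def mk_zero)
    qed
    show "span (Bas :: ('a^2^2) set) = UNIV"
    proof (rule set_eqI, simp)
      fix A :: "'a^2^2"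
      obtain a b c d where A: "A = mk a b c d" by (rule mk_cases)
      have e: "A = msmult a (mk 1 0 0 0) + msmult b (mk 0 1 0 0) + msmult c (mk 0 0 1 0) + msmult d (mk 0 0 0 1)"
        by (simp add: A)
      show "A \<in> span Bas" unfolding e
        by (intro span_add span_scale span_base) (auto simp: Bas_def)
    qed
  qed
qed



definition dt :: "'a::field^2^2 \<Rightarrow> 'a" where
  "dt A = A$1$1 * A$2$2 - A$1$2 * A$2$1"

lemma mk_dt[simp]: "dt (mk a b c d) = a * d - b * c" by (simp add: dt_def)

lemmas mkS = mk_trace mk_dt mk_smult mk_mult mk_diff mk_add mk_eq mk_one mk_zero

lemma CH: "(A::'a::field^2^2) ** A = msmult (trace A) A - msmult (dt A) (mat 1)"
  apply (cases A rule: mk_cases)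
  apply (simp only: mkS)
  apply (intro conjI)
  apply (simp_all add: algebra_simps)
  done

lemma char2_add_self: "(2::'a::field) = 0 \<Longrightarrow> (x::'a) + x = 0"
proof -
  assume h: "(2::'a) = 0"
  have "x + x = 2 * x" by (simp only: mult_2)
  also have "\<dots> = 0" using h by (simp only: mult_zero_left)
  finally show ?thesis .
qed

lemma char2_neg: "(2::'a::field) = 0 \<Longrightarrow> - (x::'a) = x"
  using char2_add_self[of x] by (simp only: neg_eq_iff_add_eq_0)

lemma char2_minus: "(2::'a::field) = 0 \<Longrightarrow> (x::'a) - y = x + y"
  using char2_neg[of y] by (simp only: diff_conv_add_uminus)

lemma char2_mminus: "(2::'a::field) = 0 \<Longrightarrow> (X::'a^2^2) - Y = X + Y"
  apply (cases X rule: mk_cases, cases Y rule: mk_cases)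
  apply (simp only: mkS)
  apply (simp add: char2_minus)
  done

lemma idem_cases:
  assumes "(z::'a::field^2^2) ** z = z"
  shows "z = 0 \<or> z = mat 1 \<or> (trace z = 1 \<and> dt z = 0)"
proof -
  obtain a b c d where z: "z = mk a b c d" by (rule mk_cases)
  have e: "a*a + b*c = a" "a*b+b*d = b" "c*a+d*c = c" "c*b+d*d = d"
    using assms unfolding z mk_mult mk_eq by simp_all
  show ?thesis
  proof (cases "a + d = 1")
    case True
    then have d: "d = 1 - a" by (simp add: algebra_simps)
    have "a * d - b * c = 0" using e(1) unfolding d by (simp add: algebra_simps)
    then show ?thesis using True by (simp add: z)
  next
    case False
    have "b * (a + d - 1) = 0" using e(2) by (simp add: algebra_simps)
    then have b: "b = 0" using False by simp
    have "c * (a + d - 1) = 0" using e(3) by (simp add: algebra_simps)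
    then have c: "c = 0" using False by simp
    have "a * a = a" "d * d = d" using e b c by auto
    then have "(a = 0 \<or> a = 1) \<and> (d = 0 \<or> d = 1)"
      by (metis mult_cancel_right2 mult_eq_0_iff) 
    then show ?thesis using False b c unfolding z mk_zero mk_one mk_eq by auto
  qed
qed

lemma idem_of_tr_dt:
  assumes "trace (z::'a::field^2^2) = 1" "dt z = 0"
  shows "z ** z = z"
proof -
  have "z ** z = msmult 1 z - msmult 0 (mat 1)" using CH[of z] assms by simp
  also have "\<dots> = z" by (cases z rule: mk_cases) (simp only: mkS, simp)
  finally show ?thesis .
qed

lemma sm_mult_left: "msmult c A ** B = msmult c (A ** B)"
  by (cases A rule: mk_cases, cases B rule: mk_cases) (simp only: mkS, simp add: algebra_simps)
lemma sm_mult_right: "A ** msmult c B = msmult c (A ** B)"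
  by (cases A rule: mk_cases, cases B rule: mk_cases) (simp only: mkS, simp add: algebra_simps)
lemma sm_sm: "msmult c (msmult d A) = msmult (c*d) A"
  by (cases A rule: mk_cases) (simp only: mkS, simp add: algebra_simps)
lemma sm_add: "msmult c (A + B) = msmult c A + msmult c B"
  by (cases A rule: mk_cases, cases B rule: mk_cases) (simp only: mkS, simp add: algebra_simps)
lemma sm_add2: "msmult (c + d) A = msmult c A + msmult d A"
  by (cases A rule: mk_cases) (simp only: mkS, simp add: algebra_simps)
lemma sm_one[simp]: "msmult 1 A = A"
  by (cases A rule: mk_cases) (simp only: mkS, simp)
lemma sm_zero[simp]: "msmult 0 A = 0"
  by (cases A rule: mk_cases) (simp only: mkS, simp)
lemma sm_zero2[simp]: "msmult c 0 = 0"
  by (simp only: mkS, simp)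
lemma tr_sm[simp]: "trace (msmult c A) = c * trace A"
  by (cases A rule: mk_cases) (simp only: mkS, simp add: algebra_simps)
lemma dt_sm[simp]: "dt (msmult c A) = c^2 * dt A"
  by (cases A rule: mk_cases) (simp only: mkS, simp add: algebra_simps power2_eq_square)
lemma dt_one[simp]: "dt (mat 1 :: 'a::field^2^2) = 1"
  by (simp only: mkS, simp)
lemma tr_one2: "(2::'a::field) = 0 \<Longrightarrow> trace (mat 1 :: 'a^2^2) = 0"
  by (simp only: mkS, simp)
lemma tr_add: "trace (A + B) = trace A + trace (B::'a::field^2^2)"
  by (cases A rule: mk_cases, cases B rule: mk_cases) (simp only: mkS, simp add: algebra_simps)
lemma dt_mult: "dt (A ** B) = dt A * dt (B::'a::field^2^2)"
  by (cases A rule: mk_cases, cases B rule: mk_cases) (simp only: mkS, simp add: algebra_simps)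
lemma tr_comm: "trace (A ** B) = trace (B ** (A::'a::field^2^2))"
  by (cases A rule: mk_cases, cases B rule: mk_cases) (simp only: mkS, simp add: algebra_simps)

lemma mm_rdist: "((A::'a::field^2^2) + B) ** C = A ** C + B ** (C::'a::field^2^2)"
  by (cases A rule: mk_cases, cases B rule: mk_cases, cases C rule: mk_cases) (simp only: mkS, simp add: algebra_simps)
lemma mm_ldist: "(C::'a::field^2^2) ** (A + B) = C ** A + C ** (B::'a::field^2^2)"
  by (rule matrix_add_ldistrib)
lemma mm_rdiff: "((A::'a::field^2^2) - B) ** C = A ** C - B ** (C::'a::field^2^2)"
  by (cases A rule: mk_cases, cases B rule: mk_cases, cases C rule: mk_cases) (simp only: mkS, simp add: algebra_simps)
lemma mm_ldiff: "(C::'a::field^2^2) ** (A - B) = C ** A - C ** (B::'a::field^2^2)"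
  by (cases A rule: mk_cases, cases B rule: mk_cases, cases C rule: mk_cases) (simp only: mkS, simp add: algebra_simps)
lemma tr_diff: "trace (A - B) = trace A - trace (B::'a::field^2^2)"
  by (cases A rule: mk_cases, cases B rule: mk_cases) (simp only: mkS, simp add: algebra_simps)

definition bl :: "'a::field^2^2 \<Rightarrow> 'a^2^2 \<Rightarrow> 'a" where
  "bl A B = trace A * trace B - trace (A ** B)"

lemma dt_add: "dt (A + B) = dt A + dt B + bl A B"
  by (cases A rule: mk_cases, cases B rule: mk_cases) (simp only: mkS bl_def, simp add: algebra_simps)

lemma bl_sm_r: "bl A (msmult c B) = c * bl A B"
  by (cases A rule: mk_cases, cases B rule: mk_cases) (simp only: mkS bl_def, simp add: algebra_simps)
lemma bl_sm_l: "bl (msmult c A) B = c * bl A B"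
  by (cases A rule: mk_cases, cases B rule: mk_cases) (simp only: mkS bl_def, simp add: algebra_simps)
lemma bl_add_l: "bl (A + B) C = bl A C + bl B C"
  by (cases A rule: mk_cases, cases B rule: mk_cases, cases C rule: mk_cases) (simp only: mkS bl_def, simp add: algebra_simps)
lemma bl_comm: "bl A B = bl B A"
  by (cases A rule: mk_cases, cases B rule: mk_cases) (simp only: mkS bl_def, simp add: algebra_simps)

lemma dt_lin2: "dt (x + msmult s u) = dt x + s * bl x u + s^2 * dt u"
  by (simp only: dt_add bl_sm_r dt_sm) simp

lemma dt_lin3: "dt (x + msmult s u + msmult t v) =
   dt x + s * bl x u + t * bl x v + s^2 * dt u + s*t*bl u v + t^2 * dt v"
  by (simp only: dt_add bl_sm_r dt_sm bl_add_l bl_sm_l) (simp add: algebra_simps)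


definition nf :: "('a::field^2^2) set \<Rightarrow> bool" where
  "nf M \<longleftrightarrow> (\<forall>e\<in>M. e ** e = e \<longrightarrow> e = 0)"

lemma mpow_1[simp]: "mpow a (Suc 0) = a" by simp
lemma mpow_2: "mpow a 2 = a ** a" by (simp add: numeral_2_eq_2)
lemma mpow_idem: "e ** e = e \<Longrightarrow> m \<ge> 1 \<Longrightarrow> mpow e m = e"
proof (induction m)
  case (Suc m) then show ?case by (cases m) auto
qed simp
lemma mpow_nil: "a ** a = 0 \<Longrightarrow> m \<ge> 2 \<Longrightarrow> mpow a m = 0"
proof (induction m)
  case (Suc m)
  show ?case
  proof (cases "m = 1")
    case True then show ?thesis using Suc by (simp add: numeral_2_eq_2)
  next
    case False then have "m \<ge> 2" using Suc by simp
    then show ?thesis using Suc by simp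
  qed
qed simp

lemma mat1_ne0: "(mat 1 :: 'a::field^2^2) \<noteq> 0" by (simp add: mk_one mk_zero)
lemma mat1_idem: "(mat 1 :: 'a::field^2^2) ** mat 1 = mat 1" by simp

definition unit :: "2 \<Rightarrow> 2 \<Rightarrow> 'a::field^2^2" where
  "unit i j = (\<chi> r s. if r = i \<and> s = j then 1 else 0)"

lemma unit_mult: "unit i k ** e ** unit l j = msmult (e$k$l) (unit i j)"
  using exhaust_2[of i] exhaust_2[of j] exhaust_2[of k] exhaust_2[of l]
  by (elim disjE) (simp_all add: vec_eq_iff unit_def matrix_matrix_mult_def msmult_def sum_2 forall_2)

lemma unit_mk: "unit 1 1 = mk 1 0 0 0" "unit 1 2 = mk 0 1 0 0" "unit 2 1 = mk 0 0 1 0"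
  "unit 2 2 = mk (0::'a::field) 0 0 1"
  by (simp_all add: vec_eq_iff unit_def forall_2)

lemma Bas_units: "Bas = {unit 1 1, unit 1 2, unit 2 1, unit 2 (2::2) :: 'a::field^2^2}"
  by (simp add: Bas_def unit_mk)

lemma all_in:
  assumes S: "FD.subspace M" and e: "(e::'a::field^2^2) \<noteq> 0" and h: "\<forall>b c. b ** e ** c \<in> M"
  shows "M = UNIV"
proof -
  obtain k l where kl: "e$k$l \<noteq> 0" using e by (auto simp: vec_eq_iff)
  have u: "unit i j \<in> M" for i j
  proof -
    have "msmult (1 / e$k$l) (unit i k ** e ** unit l j) \<in> M"
      using h S by (simp add: FD.subspace_scale)
    also have "msmult (1 / e$k$l) (unit i k ** e ** unit l j) = unit i j"
      using kl by (simp add: unit_mult sm_sm)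
    finally show ?thesis .
  qed
  have "Bas \<subseteq> M" using u by (simp add: Bas_units)
  then have "FD.span Bas \<subseteq> M" using S by (rule FD.span_minimal)
  then show ?thesis using FD.span_Basis by auto
qed

lemma MS_iff:
  assumes c2: "(2::'a::field) = 0" and S: "FD.subspace (M::('a^2^2) set)"
  shows "(Mathieu_subspace M \<and> M \<noteq> UNIV) \<longleftrightarrow> nf M"
proof
  assume "Mathieu_subspace M \<and> M \<noteq> UNIV"
  then have ms: "\<And>a b c. (\<forall>m\<ge>1. mpow a m \<in> M) \<Longrightarrow> (\<exists>N. \<forall>m\<ge>N. b ** mpow a m ** c \<in> M)"
    and nu: "M \<noteq> UNIV" unfolding Mathieu_subspace_def by auto
  show "nf M" unfolding nf_def
  proof (intro ballI impI)
    fix e assume eM: "e \<in> M" and ee: "e ** e = e"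
    show "e = 0"
    proof (rule ccontr)
      assume e0: "e \<noteq> 0"
      have "\<forall>m\<ge>1. mpow e m \<in> M" using eM mpow_idem[OF ee] by simp
      have "\<forall>b c. b ** e ** c \<in> M"
      proof (intro allI)
        fix b c
        obtain N where N: "\<forall>m\<ge>N. b ** mpow e m ** c \<in> M"
          using ms \<open>\<forall>m\<ge>1. mpow e m \<in> M\<close> by blast
        then have "b ** mpow e (max N 1) ** c \<in> M" by simp
        then show "b ** e ** c \<in> M" using mpow_idem[OF ee, of "max N 1"] by simp
      qed
      then show False using all_in[OF S e0] nu by simp
    qed
  qed
next
  assume nfM: "nf M"
  have I_notin: "mat 1 \<notin> M" using nfM mat1_ne0 mat1_idem unfolding nf_def by blast
  have "M \<noteq> UNIV" using I_notin by auto
  moreover have "Mathieu_subspace M" unfolding Mathieu_subspace_def F_subspace_def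
  proof (intro conjI allI impI)
    show "FD.subspace M" by (rule S)
    fix a b c :: "'a^2^2"
    assume pw: "\<forall>m\<ge>1. mpow a m \<in> M"
    have aM: "a \<in> M" using pw[rule_format, of 1] by simp
    have a2M: "a ** a \<in> M" using pw[rule_format, of 2] by (simp add: mpow_2)
    have ch: "a ** a = msmult (trace a) a + msmult (dt a) (mat 1)"
      using CH[of a] char2_mminus[OF c2] by simp
    have aa: "a ** a = 0"
    proof (cases "trace a = 0")
      case t0: True
      show ?thesis
      proof (cases "dt a = 0")
        case True then show ?thesis using ch t0 by simp
      next
        case False
        have "msmult (1 / dt a) (a ** a) \<in> M" using a2M S by (simp add: FD.subspace_scale)
        also have "msmult (1 / dt a) (a ** a) = mat 1" using ch t0 False by (simp add: sm_sm)
        finally show ?thesis using I_notin by simp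
      qed
    next
      case t1: False
      show ?thesis
      proof (cases "dt a = 0")
        case True
        let ?e = "msmult (1 / trace a) a"
        have eM: "?e \<in> M" using aM S by (simp add: FD.subspace_scale)
        have "?e ** ?e = msmult (1 / trace a) (msmult (1 / trace a) (a ** a))"
          by (simp add: sm_mult_left sm_mult_right)
        also have "\<dots> = ?e" using ch True t1 by (simp add: sm_sm)
        finally have "?e = 0" using nfM eM unfolding nf_def by blast
        then have "trace ?e = 0" by (simp add: mk_zero)
        then show ?thesis using t1 by simp
      next
        case False
        have "a ** a - msmult (trace a) a \<in> M" using a2M aM S
          by (simp add: FD.subspace_scale FD.subspace_diff)
        then have "msmult (1 / dt a) (a ** a - msmult (trace a) a) \<in> M" using S
          by (simp add: FD.subspace_scale)
        also have "msmult (1 / dt a) (a ** a - msmult (trace a) a) = mat 1"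
          using ch False by (simp add: sm_sm)
        finally show ?thesis using I_notin by simp
      qed
    qed
    show "\<exists>N. \<forall>m\<ge>N. b ** mpow a m ** c \<in> M"
      using mpow_nil[OF aa] FD.subspace_0[OF S]
      by (intro exI[of _ 2]) (simp add: )
  qed
  ultimately show "Mathieu_subspace M \<and> M \<noteq> UNIV" by simp
qed


lemma root2:
  assumes alg: "\<forall>p :: 'a::field poly. degree p \<ge> 1 \<longrightarrow> (\<exists>x. poly p x = 0)"
    and ab: "a \<noteq> 0 \<or> b \<noteq> 0"
  shows "\<exists>s::'a. a * s^2 + b * s + c = 0"
proof (cases "a = 0")
  case True
  then have "b \<noteq> 0" using ab by simp
  then show ?thesis using True by (intro exI[of _ "- c / b"]) (simp add: field_simps)
next
  case False
  have "degree [:c, b, a:] = 2" using False by simp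
  then have h: "degree [:c, b, a:] \<ge> 1" by linarith
  from alg h have "\<exists>x. poly [:c, b, a:] x = 0" by blast
  then obtain s where "poly [:c, b, a:] s = 0" by blast
  then show ?thesis by (intro exI[of _ s]) (simp add: algebra_simps power2_eq_square)
qed

lemma span2: "FD.span {u, v} = {msmult a u + msmult b v | a b. True}"
proof -
  have "FD.span {u, v} = {x. \<exists>k. x - msmult k u \<in> FD.span {v}}"
    by (simp add: FD.span_insert)
  also have "\<dots> = {msmult a u + msmult b v | a b. True}"
    apply (auto simp: FD.span_singleton)
    subgoal for x k ka by (rule exI[of _ k], rule exI[of _ ka]) (metis add.commute diff_add_cancel)
    subgoal for a b by (rule exI[of _ a]) auto
    done
  finally show ?thesis .
qed

lemma indep2:
  assumes "FD.independent {u, v}" "u \<noteq> v"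
  shows "u \<noteq> 0" "\<forall>k. v \<noteq> msmult k u"
proof -
  show "u \<noteq> 0" using assms(1) FD.dependent_zero by blast
  have "v \<notin> FD.span {u}" using assms FD.independent_insert[of v "{u}"] by (auto simp: insert_commute)
  then show "\<forall>k. v \<noteq> msmult k u" by (auto simp: FD.span_singleton)
qed

lemma iso_dep:
  assumes c2: "(2::'a::field) = 0"
    and tu: "trace (u::'a^2^2) = 0" and tv: "trace v = 0" and du: "dt u = 0" and dv: "dt v = 0"
    and b: "bl u v = 0" and u0: "u \<noteq> 0"
  shows "\<exists>k. v = msmult k u"
proof -
  obtain a b c d where u: "u = mk a b c d" by (rule mk_cases)
  obtain a' b' c' d' where v: "v = mk a' b' c' d'" by (rule mk_cases)
  have n: "\<And>x::'a. - x = x" using char2_neg[OF c2] .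
  have z: "\<And>x::'a. x + x = 0" using char2_add_self[OF c2] .
  have "a + d = 0" using tu by (simp add: u)
  then have "d = - a" by (simp add: add_eq_0_iff)
  then have d: "d = a" using n[of a] by simp
  have "a' + d' = 0" using tv by (simp add: v)
  then have "d' = - a'" by (simp add: add_eq_0_iff)
  then have d': "d' = a'" using n[of a'] by simp
  have e1: "a * a = b * c" using du by (simp add: u d)
  have e2: "a' * a' = b' * c'" using dv by (simp add: v d')
  have h: "- (b' * c) = b * c'" using b c2 by (simp add: u v d d' bl_def algebra_simps)
  then have "b' * c + b * c' = 0" by (simp only: neg_eq_iff_add_eq_0)
  then have "b*c' + c*b' = 0" by (simp add: algebra_simps)
  then have "b*c' = - (c * b')" by (simp only: add_eq_0_iff2)
  then have e3: "b * c' = c * b'" using n[of "c*b'"] by simp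
  have sq: "\<And>x y::'a. x * x = y * y \<Longrightarrow> x = y"
  proof -
    fix x y :: 'a assume "x * x = y * y"
    then have "(x - y) * (x - y) = (y * y + y * y) - (x*y + x*y)" 
      by (simp add: algebra_simps)
    also have "\<dots> = 0" using z[of "y*y"] z[of "x*y"] by (simp only: diff_self diff_zero)
    finally show "x = y" by simp
  qed
  show ?thesis
  proof (cases "b = 0")
    case False
    define k where "k = b' / b"
    have b': "b' = k * b" using False by (simp add: k_def)
    have c': "c' = k * c" using e3 False by (simp add: b' field_simps)
    have "a' * a' = (k * a) * (k * a)" using e1 e2 by (simp add: b' c' algebra_simps)
    then have "a' = k * a" by (rule sq)
    then show ?thesis by (intro exI[of _ k]) (simp add: u v b' c' d d')
  next
    case b0: True
    show ?thesis
    proof (cases "c = 0")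
      case False
      define k where "k = c' / c"
      have c': "c' = k * c" using False by (simp add: k_def)
      have b': "b' = k * b" using e3 False b0 by (simp add: c' field_simps)
      have "a' * a' = (k * a) * (k * a)" using e1 e2 by (simp add: b' c' algebra_simps)
      then have "a' = k * a" by (rule sq)
      then show ?thesis by (intro exI[of _ k]) (simp add: u v b' c' d d')
    next
      case True
      then have "a = 0" using e1 b0 by simp
      then have "u = 0" using b0 True by (simp add: u d mk_zero)
      then show ?thesis using u0 by simp
    qed
  qed
qed


lemma no_three:
  assumes c2: "(2::'a::field) = 0"
    and alg: "\<forall>p :: 'a poly. degree p \<ge> 1 \<longrightarrow> (\<exists>x. poly p x = 0)"
    and S: "FD.subspace M" and nfM: "nf M"
    and xM: "(x::'a^2^2) \<in> M" and tx: "trace x = 1"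
    and uM: "u \<in> M" and vM: "v \<in> M" and tu: "trace u = 0" and tv: "trace v = 0"
    and ind: "FD.independent {u, v}" and uv: "u \<noteq> v"
  shows False
proof -
  have u0: "u \<noteq> 0" and nk: "\<forall>k. v \<noteq> msmult k u" using indep2[OF ind uv] by auto
  have "\<exists>s t. dt (x + msmult s u + msmult t v) = 0"
  proof (cases "dt u \<noteq> 0 \<or> bl x u \<noteq> 0")
    case True
    then obtain s where "dt u * s^2 + bl x u * s + dt x = 0" using root2[OF alg] by blast
    then have "dt (x + msmult s u + msmult 0 v) = 0" by (simp only: dt_lin3) (simp add: algebra_simps)
    then show ?thesis by blast
  next
    case F1: False
    show ?thesis
    proof (cases "bl u v \<noteq> 0")
      case True
      then obtain s where "0 * s^2 + bl u v * s + (dt x + bl x v + dt v) = 0"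
        using root2[OF alg, of 0 "bl u v"] by blast
      then have "dt (x + msmult s u + msmult 1 v) = 0" using F1 by (simp only: dt_lin3) (simp add: algebra_simps)
      then show ?thesis by blast
    next
      case F2: False
      show ?thesis
      proof (cases "dt v \<noteq> 0 \<or> bl x v \<noteq> 0")
        case True
        then obtain t where "dt v * t^2 + bl x v * t + dt x = 0" using root2[OF alg] by blast
        then have "dt (x + msmult 0 u + msmult t v) = 0" by (simp only: dt_lin3) (simp add: algebra_simps)
        then show ?thesis by blast
      next
        case False
        then have "\<exists>k. v = msmult k u" using iso_dep[OF c2 tu tv _ _ _ u0] F1 F2 by simp
        then show ?thesis using nk by blast
      qed
    qed
  qed
  then obtain s t where st: "dt (x + msmult s u + msmult t v) = 0" by blast
  let ?z = "x + msmult s u + msmult t v"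
  have zM: "?z \<in> M" using S xM uM vM by (intro FD.subspace_add FD.subspace_scale) auto
  have tz: "trace ?z = 1" using tx tu tv by (simp add: tr_add)
  have "?z ** ?z = ?z" using idem_of_tr_dt[OF tz st] .
  then have "?z = 0" using nfM zM unfolding nf_def by blast
  then show False using tz by (simp add: mk_zero)
qed

lemma card3: "card {a, b, c} \<le> 3"
  by (simp add: card_insert_if)

lemma two_elems:
  assumes "finite B" "card B \<ge> 2"
  obtains u v where "u \<in> B" "v \<in> B" "u \<noteq> v"
proof -
  have "B \<noteq> {}" using assms by auto
  then obtain u where u: "u \<in> B" by blast
  have "B - {u} \<noteq> {}"
  proof
    assume "B - {u} = {}"
    then have "B \<subseteq> {u}" by blast
    then have "card B \<le> 1" using card_mono[of "{u}" B] by simp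
    then show False using assms by simp
  qed
  then obtain v where "v \<in> B" "v \<noteq> u" by blast
  then show ?thesis using that u by blast
qed

lemma dim_le2:
  assumes c2: "(2::'a::field) = 0"
    and alg: "\<forall>p :: 'a poly. degree p \<ge> 1 \<longrightarrow> (\<exists>x. poly p x = 0)"
    and S: "FD.subspace (M::('a^2^2) set)" and nfM: "nf M"
  shows "FD.dim M \<le> 2"
proof (cases "\<forall>y\<in>M. trace y = 0")
  case True
  have I: "mat 1 \<notin> M" using nfM mat1_ne0 mat1_idem unfolding nf_def by blast
  have n: "\<And>x::'a. - x = x" using char2_neg[OF c2] .
  have sub: "insert (mat 1) M \<subseteq> FD.span {mat 1, unit 1 2, unit 2 1}"
  proof
    fix y assume "y \<in> insert (mat 1) M"
    then show "y \<in> FD.span {mat 1, unit 1 2, unit 2 1}"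
    proof
      assume "y = mat 1" then show ?thesis by (simp add: FD.span_base)
    next
      assume "y \<in> M"
      then have ty: "trace y = 0" using True by blast
      obtain a b c d where y: "y = mk a b c d" by (rule mk_cases)
      have "a + d = 0" using ty y by simp
      then have "d = - a" by (simp add: add_eq_0_iff)
      then have d: "d = a" using n[of a] by simp
      have "y = msmult a (mat 1) + msmult b (unit 1 2) + msmult c (unit 2 1)"
        by (simp add: y d unit_mk mk_one)
      also have "\<dots> \<in> FD.span {mat 1, unit 1 2, unit 2 1}"
        by (intro FD.span_add FD.span_scale FD.span_base) auto
      finally show ?thesis .
    qed
  qed
  have "FD.dim (insert (mat 1) M) \<le> card {mat 1, unit 1 2, unit 2 (1::2) :: 'a^2^2}"
    by (rule FD.dim_le_card[OF sub]) simp
  also have "\<dots> \<le> 3" by (rule card3)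
  finally have d3: "FD.dim (insert (mat 1) M) \<le> 3" .
  have "mat 1 \<notin> FD.span M" by (metis FD.span_eq_iff I S)
  then have "FD.dim (insert (mat 1) M) = FD.dim M + 1" by (simp add: FD.dim_insert)
  then show ?thesis using d3 by simp
next
  case False
  then obtain y where yM: "y \<in> M" and ty: "trace y \<noteq> 0" by blast
  define x where "x = msmult (1 / trace y) y"
  have xM: "x \<in> M" using S yM by (simp add: x_def FD.subspace_scale)
  have tx: "trace x = 1" using ty by (simp add: x_def)
  define V where "V = {v \<in> M. trace v = 0}"
  have "M \<subseteq> FD.span (insert x V)"
  proof
    fix w assume wM: "w \<in> M"
    have "w - msmult (trace w) x \<in> V" using wM xM S tx
      by (simp add: V_def FD.subspace_diff FD.subspace_scale tr_diff)
    then have "msmult (trace w) x + (w - msmult (trace w) x) \<in> FD.span (insert x V)"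
      by (intro FD.span_add FD.span_scale FD.span_base) auto
    then show "w \<in> FD.span (insert x V)" by simp
  qed
  then have "FD.dim M \<le> FD.dim (insert x V)" by (rule FD.dim_mono)
  also have "\<dots> \<le> FD.dim V + 1" by (simp add: FD.dim_insert)
  finally have dMV: "FD.dim M \<le> FD.dim V + 1" .
  show ?thesis
  proof (rule ccontr)
    assume "\<not> FD.dim M \<le> 2"
    then have dV: "FD.dim V \<ge> 2" using dMV by simp
    obtain B where B: "B \<subseteq> V" "FD.independent B" "card B = FD.dim V" by (rule FD.basis_exists) 
    have fB: "finite B" using B(2) by (rule FD.finiteI_independent)
    obtain u v where uv: "u \<in> B" "v \<in> B" "u \<noteq> v" using two_elems[OF fB] B(3) dV by auto
    have ind: "FD.independent {u, v}" using FD.independent_mono[OF B(2), of "{u, v}"] uv by auto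
    show False
      using no_three[OF c2 alg S nfM xM tx _ _ _ _ ind uv(3)] uv B(1) unfolding V_def by blast
  qed
qed


lemma rank_id:
  assumes "dt (e::'a::field^2^2) = 0"
  shows "(e ** n)$i$j * (n ** e)$k$l = e$i$l * (n ** e ** n)$k$j"
proof -
  obtain a b c d where e: "e = mk a b c d" by (rule mk_cases)
  obtain p q r s where n: "n = mk p q r s" by (rule mk_cases)
  have h: "a * d - b * c = 0" using assms by (simp add: e)
  have "\<forall>i j k l. (e ** n)$i$j * (n ** e)$k$l = e$i$l * (n ** e ** n)$k$j"
    apply (simp only: forall_2 e n mk_mult mk_nth)
    apply (intro conjI)
    apply (use h in algebra)+
    done
  then show ?thesis by blast
qed

lemma prop_id:
  assumes "dt (e1::'a::field^2^2) = 0" "dt e2 = 0"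
  shows "(e1 ** y ** e2)$i$j * (e1 ** z ** e2)$k$l = (e1 ** y ** e2)$k$l * (e1 ** z ** e2)$i$j"
proof -
  obtain a b c d where e: "e1 = mk a b c d" by (rule mk_cases)
  obtain a' b' c' d' where f: "e2 = mk a' b' c' d'" by (rule mk_cases)
  obtain p q r s where y: "y = mk p q r s" by (rule mk_cases)
  obtain p' q' r' s' where z: "z = mk p' q' r' s'" by (rule mk_cases)
  have h1: "a * d - b * c = 0" using assms by (simp add: e)
  have h2: "a' * d' - b' * c' = 0" using assms by (simp add: f)
  have "\<forall>i j k l. (e1 ** y ** e2)$i$j * (e1 ** z ** e2)$k$l = (e1 ** y ** e2)$k$l * (e1 ** z ** e2)$i$j"
    apply (simp only: forall_2 e f y z mk_mult mk_nth)
    apply (intro conjI)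
    apply (rule refl | use h1 h2 in algebra)+
    done
  then show ?thesis by blast
qed

lemma tr_zero[simp]: "trace (0::'a::field^2^2) = 0" by (simp only: mk_zero mk_trace) simp
lemma dt_zero[simp]: "dt (0::'a::field^2^2) = 0" by (simp only: mk_zero mk_dt) simp

lemma mchar2_add: "(2::'a::field) = 0 \<Longrightarrow> (X::'a^2^2) + X = 0"
proof -
  assume c2: "(2::'a) = 0"
  obtain a b c d where X: "X = mk a b c d" by (rule mk_cases)
  have "X + X = mk (a+a) (b+b) (c+c) (d+d)" by (simp only: X mk_add)
  also have "\<dots> = mk 0 0 0 0" using char2_add_self[OF c2] by simp
  finally show ?thesis by (simp only: mk_zero)
qed
lemma mchar2_neg: "(2::'a::field) = 0 \<Longrightarrow> - (X::'a^2^2) = X"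
  using mchar2_add[of X] by (simp only: neg_eq_iff_add_eq_0)

lemma entry_unit: "(e1 ** unit k l ** e2)$i$j = e1$i$k * e2$l$(j::2)"
  using exhaust_2[of k] exhaust_2[of l]
  by (elim disjE) (simp_all add: matrix_matrix_mult_def sum_2 unit_def)

lemma dt_pair: "dt (msmult a x + msmult b v) = a^2 * dt x + a*b*bl x v + b^2 * dt v"
  by (simp only: dt_add dt_sm bl_sm_l bl_sm_r) (simp add: algebra_simps)

definition Pset :: "'a::field^2^2 \<Rightarrow> 'a^2^2 \<Rightarrow> 'a \<Rightarrow> 'a \<Rightarrow> ('a^2^2) set" where
  "Pset e1 e2 l1 l2 = {msmult c (msmult l1 e1 + msmult l2 e2) + e1 ** x ** e2 | c x. True}"

lemma P_props:
  assumes c2: "(2::'a::field) = 0"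
    and i1: "e1 ** e1 = (e1::'a^2^2)" and i2: "e2 ** e2 = e2" and n1: "e1 \<noteq> 0" and n2: "e2 \<noteq> 0"
    and s: "e1 + e2 = mat 1" and l12: "l1 \<noteq> l2" and l10: "l1 \<noteq> 0" and l20: "l2 \<noteq> 0"
    and ls: "l1 + l2 \<noteq> 0"
  shows "FD.subspace (Pset e1 e2 l1 l2)" "nf (Pset e1 e2 l1 l2)" "FD.dim (Pset e1 e2 l1 l2) \<ge> 2"
proof -
  let ?P = "Pset e1 e2 l1 l2"
  define w where "w = msmult l1 e1 + msmult l2 e2"
  have e2d: "e2 = mat 1 - e1" using s by (metis add_diff_cancel_left')
  have e1d: "e1 = mat 1 - e2" using s by (metis add_diff_cancel_right')
  have e1I: "e1 \<noteq> mat 1" using n2 e2d by auto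
  have e2I: "e2 \<noteq> mat 1" using n1 e1d by auto
  have t1: "trace e1 = 1" "dt e1 = 0" using idem_cases[OF i1] n1 e1I by auto
  have t2: "trace e2 = 1" "dt e2 = 0" using idem_cases[OF i2] n2 e2I by auto
  have o12: "e1 ** e2 = 0" unfolding e2d by (simp add: mm_ldiff i1)
  have o21: "e2 ** e1 = 0" unfolding e2d by (simp add: mm_rdiff i1)
  have Pw: "?P = {msmult c w + e1 ** x ** e2 | c x. True}" by (simp add: Pset_def w_def)
  have tp: "trace (e1 ** x ** e2) = 0" for x
  proof -
    have "trace (e1 ** x ** e2) = trace (e2 ** (e1 ** x))" by (rule tr_comm)
    also have "\<dots> = trace ((e2 ** e1) ** x)" by (simp add: matrix_mul_assoc)
    finally show ?thesis by (simp add: o21)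
  qed
  have dp: "dt (e1 ** x ** e2) = 0" for x by (simp add: dt_mult t1 t2)
  have tw: "trace w = l1 + l2" by (simp add: w_def tr_add t1 t2)
  have wp: "w ** (e1 ** x ** e2) = msmult l1 (e1 ** x ** e2)" for x
  proof -
    have "w ** (e1 ** x ** e2) = msmult l1 ((e1 ** e1) ** x ** e2) + msmult l2 ((e2 ** e1) ** x ** e2)"
      by (simp add: w_def mm_rdist sm_mult_left matrix_mul_assoc)
    then show ?thesis by (simp add: i1 o21)
  qed
  have blwp: "bl w (e1 ** x ** e2) = 0" for x
    by (simp add: bl_def wp tp)
  have dw: "dt w = l1 * l2"
  proof -
    have "dt w = l1^2 * dt e1 + l1*l2*bl e1 e2 + l2^2 * dt e2" by (simp add: w_def dt_pair)
    also have "\<dots> = l1 * l2" by (simp add: t1 t2 bl_def o12 mk_zero)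
    finally show ?thesis .
  qed
  show "FD.subspace ?P" unfolding FD.subspace_def Pw
  proof (intro conjI ballI allI)
    show "0 \<in> {msmult c w + e1 ** x ** e2 | c x. True}"
      by (rule CollectI, rule exI[of _ 0], rule exI[of _ 0]) simp
  next
    fix y z assume "y \<in> {msmult c w + e1 ** x ** e2 | c x. True}" "z \<in> {msmult c w + e1 ** x ** e2 | c x. True}"
    then obtain c x c' x' where y: "y = msmult c w + e1 ** x ** e2" and z: "z = msmult c' w + e1 ** x' ** e2" by blast
    have "y + z = msmult (c + c') w + e1 ** (x + x') ** e2"
      by (simp add: y z sm_add2 mm_ldist mm_rdist algebra_simps)
    then show "y + z \<in> {msmult c w + e1 ** x ** e2 | c x. True}" by blast
  next
    fix k y assume "y \<in> {msmult c w + e1 ** x ** e2 | c x. True}"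
    then obtain c x where y: "y = msmult c w + e1 ** x ** e2" by blast
    have "msmult k y = msmult (k * c) w + e1 ** (msmult k x) ** e2"
      by (simp add: y sm_add sm_sm sm_mult_left sm_mult_right)
    then show "msmult k y \<in> {msmult c w + e1 ** x ** e2 | c x. True}" by blast
  qed
  show "nf ?P" unfolding nf_def Pw
  proof (intro ballI impI)
    fix z assume "z \<in> {msmult c w + e1 ** x ** e2 | c x. True}" and zz: "z ** z = z"
    then obtain c x where z: "z = msmult c w + e1 ** x ** e2" by blast
    have tz: "trace z = c * (l1 + l2)" by (simp add: z tr_add tw tp)
    have "dt z = dt (msmult c w + msmult 1 (e1 ** x ** e2))" by (simp add: z)
    also have "\<dots> = c^2 * (l1 * l2)" by (simp only: dt_pair dw blwp dp) simp
    finally have dz: "dt z = c^2 * (l1 * l2)" .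
    show "z = 0"
    proof (cases "c = 0")
      case True
      then have "dt z = 0" "trace z = 0" using dz tz by auto
      then show ?thesis using idem_cases[OF zz] by (auto simp: mk_one)
    next
      case False
      then have "dt z \<noteq> 0" using dz l10 l20 by simp
      moreover have "trace z \<noteq> 0" using tz False ls by simp
      ultimately show ?thesis using idem_cases[OF zz] tr_one2[OF c2] by auto
    qed
  qed
  obtain i k where ik: "e1$i$k \<noteq> 0" using n1 by (auto simp: vec_eq_iff)
  obtain l j where lj: "e2$l$j \<noteq> 0" using n2 by (auto simp: vec_eq_iff)
  define p0 where "p0 = e1 ** unit k l ** e2"
  have p00: "p0 \<noteq> 0"
  proof
    assume "p0 = 0"
    then have "p0$i$j = 0" by simp
    then show False using ik lj by (simp add: p0_def entry_unit)
  qed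
  have wP: "w \<in> ?P" unfolding Pw by (rule CollectI, rule exI[of _ 1], rule exI[of _ 0]) simp
  have pP: "p0 \<in> ?P" unfolding Pw p0_def by (rule CollectI, rule exI[of _ 0], rule exI[of _ "unit k l"]) simp
  have tp0: "trace p0 = 0" by (simp add: p0_def tp)
  have wne: "w \<noteq> p0" using tw tp0 ls by auto
  have "w \<notin> FD.span {p0}"
  proof
    assume "w \<in> FD.span {p0}"
    then obtain k where "w = msmult k p0" by (auto simp: FD.span_singleton)
    then have "trace w = 0" using tp0 by simp
    then show False using tw ls by simp
  qed
  then have ind: "FD.independent {w, p0}" using p00 wne
    by (simp add: FD.independent_insert)
  have "card {w, p0} \<le> FD.dim ?P"
    by (rule FD.independent_card_le_dim) (use wP pP ind in auto)
  then show "FD.dim ?P \<ge> 2" using wne by simp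
qed


lemma nf_sl2:
  assumes c2: "(2::'a::field) = 0" and tr0: "\<forall>y\<in>M. trace (y::'a^2^2) = 0" and I: "mat 1 \<notin> M"
  shows "nf M"
  unfolding nf_def
proof (intro ballI impI)
  fix z assume zM: "z \<in> M" and zz: "z ** z = z"
  have "trace z = 0" using tr0 zM by blast
  then show "z = 0" using idem_cases[OF zz] I zM by auto
qed

lemma nf_pair:
  assumes c2: "(2::'a::field) = 0" and tx: "trace (x::'a^2^2) = 1" and dx: "dt x \<noteq> 0"
    and tv: "trace v = 0" and dv: "dt v = 0" and bxv: "bl x v = 0"
  shows "nf (FD.span {x, v})"
  unfolding nf_def span2
proof (intro ballI impI)
  fix z assume "z \<in> {msmult a x + msmult b v | a b. True}" and zz: "z ** z = z"
  then obtain a b where z: "z = msmult a x + msmult b v" by blast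
  have tz: "trace z = a" using tx tv by (simp add: z tr_add)
  have dz: "dt z = a^2 * dt x" by (simp add: z dt_pair dv bxv)
  show "z = 0"
  proof (cases "a = 0")
    case True
    then have "trace z = 0" "dt z = 0" using tz dz by auto
    then show ?thesis using idem_cases[OF zz] by auto
  next
    case False
    then have "dt z \<noteq> 0" using dz dx by simp
    then show ?thesis using idem_cases[OF zz] tr_one2[OF c2] tz False by auto
  qed
qed

lemma extend:
  assumes c2: "(2::'a::field) = 0"
    and alg: "\<forall>p :: 'a poly. degree p \<ge> 1 \<longrightarrow> (\<exists>x. poly p x = 0)"
    and S: "FD.subspace (M::('a^2^2) set)" and nfM: "nf M" and d1: "FD.dim M \<le> 1"
  shows "\<exists>M'. FD.subspace M' \<and> nf M' \<and> M \<subseteq> M' \<and> M' \<noteq> M"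
proof (cases "FD.dim M = 0")
  case True
  then have M0: "M \<subseteq> {0}" by simp
  let ?M' = "FD.span {unit 1 2 :: 'a^2^2}"
  have "nf ?M'" unfolding nf_def FD.span_singleton
  proof (intro ballI impI)
    fix z assume "z \<in> range (\<lambda>k. msmult k (unit 1 2 :: 'a^2^2))" and zz: "z ** z = z"
    then obtain k where z: "z = msmult k (unit 1 2)" by blast
    have "z ** z = 0" by (simp add: z unit_mk sm_mult_left sm_mult_right) (simp add: mk_zero)
    then show "z = 0" using zz by simp
  qed
  moreover have "M \<subseteq> ?M'" using M0 FD.span_zero by blast
  moreover have "unit 1 2 \<in> ?M'" by (simp add: FD.span_base)
  moreover have "unit 1 2 \<noteq> (0::'a^2^2)" by (simp add: unit_mk mk_zero)
  ultimately show ?thesis using M0 by (intro exI[of _ ?M']) auto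
next
  case False
  have d: "FD.dim M = 1" using d1 False by linarith
  obtain B where B: "B \<subseteq> M" "FD.independent B" "M \<subseteq> FD.span B" "card B = FD.dim M"
    by (rule FD.basis_exists)
  obtain u where Bu: "B = {u}" using B(4) d card_1_singletonE by metis
  have u0: "u \<noteq> 0" using B(2) Bu by simp
  have uM: "u \<in> M" using B(1) Bu by simp
  have Mspan: "M = FD.span {u}"
    using B(3) Bu FD.span_minimal[of "{u}" M] uM S by auto
  have I: "mat 1 \<notin> M" using nfM mat1_ne0 mat1_idem unfolding nf_def by blast
  have n: "\<And>x::'a. - x = x" using char2_neg[OF c2] .
  show ?thesis
  proof (cases "trace u = 0")
    case True
    obtain a b c d where u: "u = mk a b c d" by (rule mk_cases)
    have "a + d = 0" using True by (simp add: u)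
    then have "d = - a" by (simp add: add_eq_0_iff)
    then have d: "d = a" using n[of a] by simp
    have bc: "b \<noteq> 0 \<or> c \<noteq> 0"
    proof (rule ccontr)
      assume "\<not> (b \<noteq> 0 \<or> c \<noteq> 0)"
      then have bc0: "b = 0" "c = 0" by auto
      then have a0: "a \<noteq> 0" using u0 by (simp add: u d mk_zero)
      have "msmult (1/a) u \<in> M" using uM S by (simp add: FD.subspace_scale)
      also have "msmult (1/a) u = mat 1" using a0 by (simp add: u d bc0 mk_one)
      finally show False using I by simp
    qed
    define v where "v = (if b \<noteq> 0 then mk 0 0 1 0 else mk 0 1 0 (0::'a))"
    have tv: "trace v = 0" by (simp add: v_def)
    let ?M' = "FD.span {u, v}"
    have I': "mat 1 \<notin> ?M'"
    proof
      assume "mat 1 \<in> ?M'"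
      then obtain p q where "mat 1 = msmult p u + msmult q v" by (auto simp: span2)
      then show False using bc by (auto simp: u d v_def mk_one split: if_splits)
    qed
    have tr0: "\<forall>y\<in>?M'. trace y = 0" using True tv by (auto simp: span2 tr_add)
    have "v \<notin> M"
    proof
      assume "v \<in> M"
      then obtain k where "v = msmult k u" using Mspan by (auto simp: FD.span_singleton)
      then show False using bc by (auto simp: u d v_def split: if_splits)
    qed
    moreover have "v \<in> ?M'" by (simp add: FD.span_base)
    moreover have "M \<subseteq> ?M'" unfolding Mspan by (rule FD.span_mono) auto
    ultimately show ?thesis using nf_sl2[OF c2 tr0 I'] by (intro exI[of _ ?M']) auto
  next
    case False
    define x where "x = msmult (1 / trace u) u"
    have xM: "x \<in> M" using uM S by (simp add: x_def FD.subspace_scale)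
    have tx: "trace x = 1" using False by (simp add: x_def)
    have dx: "dt x \<noteq> 0"
    proof
      assume "dt x = 0"
      then have "x ** x = x" using idem_of_tr_dt[OF tx] by simp
      then have "x = 0" using nfM xM unfolding nf_def by blast
      then show False using tx by simp
    qed
    obtain x1 x2 x3 x4 where xd: "x = mk x1 x2 x3 x4" by (rule mk_cases)
    have x14: "x1 + x4 = 1" using tx by (simp add: xd)
    have "\<exists>v. v \<noteq> 0 \<and> trace v = 0 \<and> dt v = 0 \<and> bl x v = 0"
    proof (cases "x3 = 0")
      case True
      show ?thesis
        by (rule exI[of _ "mk 0 1 0 0"]) (simp add: mk_zero bl_def xd True)
    next
      case False
      then obtain s where s: "x3 * s^2 + 1 * s + x2 = 0" using root2[OF alg] by blast
      have "trace (mk s (s^2) 1 s) = 0" using char2_add_self[OF c2] by simp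
      moreover have "dt (mk s (s^2) 1 s) = 0" by (simp add: power2_eq_square)
      moreover have "bl x (mk s (s^2) 1 s) = 0"
      proof -
        have "bl x (mk s (s^2) 1 s) = (x1 + x4) * (s + s) - (s * (x1 + x4) + (x3 * s^2 + 1 * s + x2) - s)"
          by (simp add: bl_def xd algebra_simps power2_eq_square)
        also have "\<dots> = 0" using x14 s char2_add_self[OF c2, of s] by simp
        finally show ?thesis .
      qed
      moreover have "mk s (s^2) 1 s \<noteq> 0" by (simp add: mk_zero)
      ultimately show ?thesis by blast
    qed
    then obtain v where v0: "v \<noteq> 0" and tv: "trace v = 0" and dv: "dt v = 0" and bxv: "bl x v = 0"
      by blast
    let ?M' = "FD.span {x, v}"
    have "v \<notin> M"
    proof
      assume "v \<in> M"
      then obtain k where k: "v = msmult k u" using Mspan by (auto simp: FD.span_singleton)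
      then have "k * trace u = 0" using tv by simp
      then have "k = 0" using False by simp
      then show False using k v0 by simp
    qed
    moreover have "v \<in> ?M'" by (simp add: FD.span_base)
    moreover have "M \<subseteq> ?M'"
    proof -
      have "u = msmult (trace u) x" using False by (simp add: x_def sm_sm)
      then have "u \<in> ?M'" by (metis FD.span_base FD.span_scale insertI1)
      then show ?thesis unfolding Mspan using FD.span_minimal[of "{u}" ?M'] by auto
    qed
    ultimately show ?thesis using nf_pair[OF c2 tx dx tv dv bxv] by (intro exI[of _ ?M']) auto
  qed
qed


lemma xyx: "(X::'a::field^2^2) ** Y ** X = msmult (trace (X ** Y)) X - msmult (dt X) (msmult (trace Y) (mat 1) - Y)"
  apply (cases X rule: mk_cases, cases Y rule: mk_cases)
  apply (simp only: mkS)
  apply (intro conjI)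
  apply (simp_all add: algebra_simps)
  done

lemma set_eq:
  assumes Mspan: "M = FD.span {x, n}" and n0: "n \<noteq> 0" and en: "E1 ** n ** E2 = n"
    and d1: "dt (E1::'a::field^2^2) = 0" and d2: "dt E2 = 0"
  shows "M = {msmult c x + E1 ** y ** E2 | c y. True}"
proof
  show "M \<subseteq> {msmult c x + E1 ** y ** E2 | c y. True}"
  proof
    fix m assume "m \<in> M"
    then obtain a b where m: "m = msmult a x + msmult b n" unfolding Mspan span2 by blast
    have "m = msmult a x + E1 ** (msmult b n) ** E2"
      using en by (simp add: m sm_mult_left sm_mult_right)
    then show "m \<in> {msmult c x + E1 ** y ** E2 | c y. True}" by blast
  qed
next
  show "{msmult c x + E1 ** y ** E2 | c y. True} \<subseteq> M"
  proof
    fix m assume "m \<in> {msmult c x + E1 ** y ** E2 | c y. True}"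
    then obtain c y where m: "m = msmult c x + E1 ** y ** E2" by blast
    obtain k l where kl: "n$k$l \<noteq> 0" using n0 by (auto simp: vec_eq_iff)
    define r where "r = (E1 ** y ** E2)$k$l / n$k$l"
    have "E1 ** y ** E2 = msmult r n"
    proof (simp add: vec_eq_iff msmult_def, intro allI)
      fix i j
      have "(E1 ** y ** E2)$i$j * (E1 ** n ** E2)$k$l = (E1 ** y ** E2)$k$l * (E1 ** n ** E2)$i$j"
        by (rule prop_id[OF d1 d2])
      then have "(E1 ** y ** E2)$i$j * n$k$l = (E1 ** y ** E2)$k$l * n$i$j" by (simp only: en)
      then show "(E1 ** y ** E2)$i$j = r * n$i$j" using kl by (simp add: r_def field_simps)
    qed
    then have "m = msmult c x + msmult r n" by (simp add: m)
    then show "m \<in> M" unfolding Mspan span2 by blast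
  qed
qed

lemma classify:
  assumes c2: "(2::'a::field) = 0"
    and alg: "\<forall>p :: 'a poly. degree p \<ge> 1 \<longrightarrow> (\<exists>x. poly p x = 0)"
    and S: "FD.subspace (M::('a^2^2) set)" and nfM: "nf M" and d2: "FD.dim M = 2"
    and nt: "\<not> (\<forall>y\<in>M. trace y = 0)"
  shows "\<exists>e1 e2 l1 l2. idempotent_mat e1 \<and> idempotent_mat e2 \<and> e1 \<noteq> 0 \<and> e2 \<noteq> 0 \<and>
          e1 + e2 = mat 1 \<and> l1 \<noteq> l2 \<and> l1 \<noteq> 0 \<and> l2 \<noteq> 0 \<and> l1 + l2 \<noteq> 0 \<and>
          M = {msmult c (msmult l1 e1 + msmult l2 e2) + e1 ** x ** e2 | c x. True}"
proof -
  have z: "\<And>t::'a. t + t = 0" using char2_add_self[OF c2] .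
  have ng: "\<And>t::'a. - t = t" using char2_neg[OF c2] .
  have mz: "\<And>X::'a^2^2. X + X = 0" using mchar2_add[OF c2] .
  have mng: "\<And>X::'a^2^2. - X = X" using mchar2_neg[OF c2] .
  obtain y where yM: "y \<in> M" and ty: "trace y \<noteq> 0" using nt by blast
  define x where "x = msmult (1 / trace y) y"
  have xM: "x \<in> M" using S yM by (simp add: x_def FD.subspace_scale)
  have tx: "trace x = 1" using ty by (simp add: x_def)
  define V where "V = {v \<in> M. trace v = 0}"
  have "M \<subseteq> FD.span (insert x V)"
  proof
    fix w assume wM: "w \<in> M"
    have "w - msmult (trace w) x \<in> V" using wM xM S tx
      by (simp add: V_def FD.subspace_diff FD.subspace_scale tr_diff)
    then have "msmult (trace w) x + (w - msmult (trace w) x) \<in> FD.span (insert x V)"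
      by (intro FD.span_add FD.span_scale FD.span_base) auto
    then show "w \<in> FD.span (insert x V)" by simp
  qed
  then have "FD.dim M \<le> FD.dim (insert x V)" by (rule FD.dim_mono)
  also have "\<dots> \<le> FD.dim V + 1" by (simp add: FD.dim_insert)
  finally have "FD.dim V \<ge> 1" using d2 by linarith
  then have "\<not> V \<subseteq> {0}" by (metis FD.dim_eq_0 not_one_le_zero)
  then obtain n where nV: "n \<in> V" and n0: "n \<noteq> 0" by blast
  have nM: "n \<in> M" and tn: "trace n = 0" using nV by (auto simp: V_def)
  have xn: "x \<noteq> n" using tx tn by auto
  have "x \<notin> FD.span {n}"
  proof
    assume "x \<in> FD.span {n}"
    then obtain k where "x = msmult k n" by (auto simp: FD.span_singleton)
    then show False using tx tn by simp
  qed
  then have ind: "FD.independent {x, n}" using n0 xn by (simp add: FD.independent_insert)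
  have Mspan: "M = FD.span {x, n}"
  proof -
    have sub: "FD.span {x, n} \<subseteq> M" using xM nM S by (intro FD.span_minimal) auto
    have "FD.dim (FD.span {x, n}) = card {x, n}" using ind by (rule FD.dim_span_eq_card_independent)
    then have "FD.dim (FD.span {x, n}) = 2" using xn by simp
    then have "FD.span {x, n} = M" using FD.subspace_dim_equal[OF FD.subspace_span S sub] d2 by simp
    then show ?thesis by simp
  qed
  have nr: "dt (x + msmult s n) \<noteq> 0" for s
  proof
    assume h: "dt (x + msmult s n) = 0"
    have "trace (x + msmult s n) = 1" using tx tn by (simp add: tr_add)
    then have "(x + msmult s n) ** (x + msmult s n) = x + msmult s n" using idem_of_tr_dt h by blast
    moreover have "x + msmult s n \<in> M" using xM nM S by (simp add: FD.subspace_add FD.subspace_scale)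
    ultimately have "x + msmult s n = 0" using nfM unfolding nf_def by blast
    then show False using \<open>trace (x + msmult s n) = 1\<close> by simp
  qed
  have dn: "dt n = 0 \<and> bl x n = 0"
  proof (rule ccontr)
    assume "\<not> (dt n = 0 \<and> bl x n = 0)"
    then obtain s where "dt n * s^2 + bl x n * s + dt x = 0" using root2[OF alg] by blast
    then have "dt (x + msmult s n) = 0" by (simp only: dt_lin2) (simp add: algebra_simps)
    then show False using nr by blast
  qed
  have dx: "dt x \<noteq> 0" using nr[of 0] by simp
  obtain l1 where l1: "1 * l1^2 + 1 * l1 + dt x = 0" using root2[OF alg, of 1 1] by auto
  define l2 where "l2 = l1 + 1"
  have l1sq: "l1 * l1 + l1 = dt x"
  proof -
    have "l1 * l1 + l1 = - dt x" using l1 by (simp add: power2_eq_square eq_neg_iff_add_eq_0)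
    then show ?thesis using ng by simp
  qed
  have l12: "l1 * l2 = dt x" using l1sq by (simp add: l2_def algebra_simps)
  have lsum: "l1 + l2 = 1" using z[of l1] by (simp add: l2_def add.assoc[symmetric])
  have l1n0: "l1 \<noteq> 0" using l12 dx by auto
  have l2n0: "l2 \<noteq> 0" using l12 dx by auto
  have l1l2: "l1 \<noteq> l2" by (simp add: l2_def)
  have l2p1: "l2 + 1 = l1" using z[of 1] by (simp add: l2_def add.assoc)
  define e1 where "e1 = x + msmult l2 (mat 1)"
  define e2 where "e2 = x + msmult l1 (mat 1)"
  have tI: "trace (mat 1 :: 'a^2^2) = 0" by (rule tr_one2[OF c2])
  have blxI: "bl x (mat 1) = - 1" using tI tx by (simp add: bl_def)
  have te1: "trace e1 = 1" using tx tI by (simp add: e1_def tr_add)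
  have te2: "trace e2 = 1" using tx tI by (simp add: e2_def tr_add)
  have de1: "dt e1 = 0"
  proof -
    have "dt e1 = dt x + l2 * (-1) + l2^2" by (simp only: e1_def dt_lin2 blxI) simp
    also have "\<dots> = (l1 * l1 + l1) + dt x" by (simp add: l2_def algebra_simps power2_eq_square)
    also have "\<dots> = 0" by (simp only: l1sq z)
    finally show ?thesis .
  qed
  have de2: "dt e2 = 0"
  proof -
    have "dt e2 = dt x + l1 * (-1) + l1^2" by (simp only: e2_def dt_lin2 blxI) simp
    also have "\<dots> = (l1 * l1 + l1) + dt x - (l1 + l1)" by (simp add: algebra_simps power2_eq_square)
    also have "\<dots> = 0" by (simp only: l1sq z diff_zero)
    finally show ?thesis .
  qed
  have i1: "e1 ** e1 = e1" by (rule idem_of_tr_dt[OF te1 de1])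
  have i2: "e2 ** e2 = e2" by (rule idem_of_tr_dt[OF te2 de2])
  have e10: "e1 \<noteq> 0" using te1 by auto
  have e20: "e2 \<noteq> 0" using te2 by auto
  have esum: "e1 + e2 = mat 1"
  proof -
    have "e1 + e2 = (x + x) + msmult (l1 + l2) (mat 1)" by (simp add: e1_def e2_def sm_add2 algebra_simps)
    then show ?thesis using mz[of x] lsum by simp
  qed
  have ew: "msmult l1 e1 + msmult l2 e2 = x"
  proof -
    obtain x1 x2 x3 x4 where xd: "x = mk x1 x2 x3 x4" by (rule mk_cases)
    have a: "l1 * (t + l2) + l2 * (t + l1) = (l1 + l2) * t + (l1*l2 + l1*l2)" for t
      by (simp add: algebra_simps)
    have b: "l1 * t + l2 * t = (l1 + l2) * t" for t by (simp add: algebra_simps)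
    have "msmult l1 e1 + msmult l2 e2 = mk (l1 * (x1 + l2) + l2 * (x1 + l1)) (l1 * x2 + l2 * x2)
       (l1 * x3 + l2 * x3) (l1 * (x4 + l2) + l2 * (x4 + l1))"
      by (simp add: e1_def e2_def xd mk_one)
    also have "\<dots> = x" by (simp only: a b lsum z xd mult_1 add_0_right)
    finally show ?thesis .
  qed
  have ew2: "msmult l2 e2 + msmult l1 e1 = x" using ew by (simp add: add.commute)
  have e2e1: "e2 = e1 + mat 1"
  proof -
    have "e1 + mat 1 = x + msmult (l2 + 1) (mat 1)" by (simp add: e1_def sm_add2 add.assoc)
    then show ?thesis using l2p1 by (simp add: e2_def)
  qed
  have txn: "trace (x ** n) = 0" using dn tx tn by (simp add: bl_def)
  have te1n: "trace (e1 ** n) = 0" using txn tn by (simp add: e1_def mm_rdist tr_add sm_mult_left)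
  have te2n: "trace (e2 ** n) = 0" using txn tn by (simp add: e2_def mm_rdist tr_add sm_mult_left)
  have K1: "e1 ** n ** e1 = 0" using xyx[of e1 n] te1n de1 by simp
  have K1': "e2 ** n ** e2 = 0" using xyx[of e2 n] te2n de2 by simp
  have K2: "n ** e1 ** n = 0" using xyx[of n e1] te1n dn tr_comm[of n e1] by simp
  have ndec: "n = e1 ** n + n ** e1"
  proof -
    have "e2 ** n ** e2 = e1 ** n ** e1 + e1 ** n + n ** e1 + n"
      by (simp add: e2e1 mm_rdist mm_ldist algebra_simps)
    then have "(e1 ** n + n ** e1) + n = 0" using K1' K1 by (simp add: add.assoc)
    then have "n = - (e1 ** n + n ** e1)" by (simp add: add_eq_0_iff)
    then show ?thesis using mng by simp
  qed
  have K3: "(e1 ** n)$i$j * (n ** e1)$k$l = 0" for i j k l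
    using rank_id[OF de1, of n i j k l] K2 by simp
  have or: "n ** e1 = 0 \<or> e1 ** n = 0"
  proof (rule ccontr)
    assume "\<not> (n ** e1 = 0 \<or> e1 ** n = 0)"
    then obtain i j k l where "(e1 ** n)$i$j \<noteq> 0" "(n ** e1)$k$l \<noteq> 0" by (auto simp: vec_eq_iff)
    then show False using K3[of i j k l] by simp
  qed
  show ?thesis
  proof (cases "n ** e1 = 0")
    case True
    have en: "e1 ** n ** e2 = n"
    proof -
      have "e1 ** n ** e2 = e1 ** n ** e1 + e1 ** n" by (simp add: e2e1 mm_ldist)
      then show ?thesis using K1 ndec True by simp
    qed
    have "M = {msmult c x + e1 ** y ** e2 | c y. True}" by (rule set_eq[OF Mspan n0 en de1 de2])
    then have "M = {msmult c (msmult l1 e1 + msmult l2 e2) + e1 ** y ** e2 | c y. True}" by (simp only: ew)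
    then show ?thesis using i1 i2 e10 e20 esum l1l2 l1n0 l2n0 lsum unfolding idempotent_mat_def
      by (intro exI[of _ e1] exI[of _ e2] exI[of _ l1] exI[of _ l2]) auto
  next
    case False
    then have e1n: "e1 ** n = 0" using or by simp
    have en: "e2 ** n ** e1 = n"
    proof -
      have "e2 ** n ** e1 = e1 ** n ** e1 + n ** e1" by (simp add: e2e1 mm_rdist)
      then show ?thesis using K1 ndec e1n by simp
    qed
    have "M = {msmult c x + e2 ** y ** e1 | c y. True}" by (rule set_eq[OF Mspan n0 en de2 de1])
    then have "M = {msmult c (msmult l2 e2 + msmult l1 e1) + e2 ** y ** e1 | c y. True}" by (simp only: ew2)
    then show ?thesis using i1 i2 e10 e20 esum l1l2 l1n0 l2n0 lsum unfolding idempotent_mat_def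
      by (intro exI[of _ e2] exI[of _ e1] exI[of _ l2] exI[of _ l1]) (auto simp: add.commute)
  qed
qed


lemma MS_proper_iff:
  assumes c2: "(2::'a::field) = 0"
  shows "(Mathieu_subspace (M::('a^2^2) set) \<and> M \<noteq> UNIV) \<longleftrightarrow> (FD.subspace M \<and> nf M)"
proof
  assume h: "Mathieu_subspace M \<and> M \<noteq> UNIV"
  then have S: "FD.subspace M" by (simp add: Mathieu_subspace_def F_subspace_def)
  then show "FD.subspace M \<and> nf M" using MS_iff[OF c2 S] h by simp
next
  assume h: "FD.subspace M \<and> nf M"
  then show "Mathieu_subspace M \<and> M \<noteq> UNIV" using MS_iff[OF c2, of M] by simp
qed

lemma max_iff:
  assumes c2: "(2::'a::field) = 0"
  shows "maximal_Mathieu_subspace (M::('a^2^2) set) \<longleftrightarrow>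
     (FD.subspace M \<and> nf M \<and> (\<forall>M'. FD.subspace M' \<and> nf M' \<and> M \<subseteq> M' \<longrightarrow> M' = M))"
  unfolding maximal_Mathieu_subspace_def using MS_proper_iff[OF c2] by blast

lemma max_dim2:
  assumes c2: "(2::'a::field) = 0"
    and alg: "\<forall>p :: 'a poly. degree p \<ge> 1 \<longrightarrow> (\<exists>x. poly p x = 0)"
  shows "maximal_Mathieu_subspace (M::('a^2^2) set) \<longleftrightarrow> (FD.subspace M \<and> nf M \<and> FD.dim M = 2)"
proof
  assume "maximal_Mathieu_subspace M"
  then have S: "FD.subspace M" and nfM: "nf M"
    and mx: "\<And>M'. FD.subspace M' \<Longrightarrow> nf M' \<Longrightarrow> M \<subseteq> M' \<Longrightarrow> M' = M"
    using max_iff[OF c2] by blast+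
  have "FD.dim M \<le> 2" by (rule dim_le2[OF c2 alg S nfM])
  moreover have "\<not> FD.dim M \<le> 1"
  proof
    assume "FD.dim M \<le> 1"
    then obtain M' where "FD.subspace M'" "nf M'" "M \<subseteq> M'" "M' \<noteq> M"
      using extend[OF c2 alg S nfM] by blast
    then show False using mx by blast
  qed
  ultimately show "FD.subspace M \<and> nf M \<and> FD.dim M = 2" using S nfM by simp
next
  assume h: "FD.subspace M \<and> nf M \<and> FD.dim M = 2"
  have "\<forall>M'. FD.subspace M' \<and> nf M' \<and> M \<subseteq> M' \<longrightarrow> M' = M"
  proof (intro allI impI)
    fix M' assume h': "FD.subspace M' \<and> nf M' \<and> M \<subseteq> M'"
    have "FD.dim M' \<le> 2" using dim_le2[OF c2 alg] h' by blast
    then have "M = M'" using FD.subspace_dim_equal[of M M'] h h' by simp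
    then show "M' = M" by simp
  qed
  then show "maximal_Mathieu_subspace M" using max_iff[OF c2] h by blast
qed

theorem theorem3p6:
  fixes M :: "(('a::field)^2^2) set"
  assumes alg_closed: "\<forall>p :: 'a poly. degree p \<ge> 1 \<longrightarrow> (\<exists>x. poly p x = 0)"
    and char2: "(2::'a) = 0"
  shows "maximal_Mathieu_subspace M \<longleftrightarrow>
    ((F_subspace M \<and> vector_space.dim msmult M = 2 \<and> M \<subseteq> {b. trace b = 0} \<and> mat 1 \<notin> M)
     \<or> (\<exists>e1 e2 l1 l2. idempotent_mat e1 \<and> idempotent_mat e2 \<and> e1 \<noteq> 0 \<and> e2 \<noteq> 0 \<and>
          e1 + e2 = mat 1 \<and> l1 \<noteq> l2 \<and> l1 \<noteq> 0 \<and> l2 \<noteq> 0 \<and> l1 + l2 \<noteq> 0 \<and>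
          M = {msmult c (msmult l1 e1 + msmult l2 e2) + e1 ** x ** e2 | c x. True}))"
proof -
  note md = max_dim2[OF char2 alg_closed, of M]
  show ?thesis
  proof
    assume "maximal_Mathieu_subspace M"
    then have S: "FD.subspace M" and nfM: "nf M" and d2: "FD.dim M = 2" using md by auto
    show "(F_subspace M \<and> vector_space.dim msmult M = 2 \<and> M \<subseteq> {b. trace b = 0} \<and> mat 1 \<notin> M)
     \<or> (\<exists>e1 e2 l1 l2. idempotent_mat e1 \<and> idempotent_mat e2 \<and> e1 \<noteq> 0 \<and> e2 \<noteq> 0 \<and>
          e1 + e2 = mat 1 \<and> l1 \<noteq> l2 \<and> l1 \<noteq> 0 \<and> l2 \<noteq> 0 \<and> l1 + l2 \<noteq> 0 \<and>
          M = {msmult c (msmult l1 e1 + msmult l2 e2) + e1 ** x ** e2 | c x. True})"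
    proof (cases "\<forall>y\<in>M. trace y = 0")
      case True
      have "mat 1 \<notin> M" using nfM mat1_ne0 mat1_idem unfolding nf_def by blast
      then show ?thesis using True S d2 by (auto simp: F_subspace_def)
    next
      case False
      then show ?thesis using classify[OF char2 alg_closed S nfM d2] by blast
    qed
  next
    assume "(F_subspace M \<and> vector_space.dim msmult M = 2 \<and> M \<subseteq> {b. trace b = 0} \<and> mat 1 \<notin> M)
     \<or> (\<exists>e1 e2 l1 l2. idempotent_mat e1 \<and> idempotent_mat e2 \<and> e1 \<noteq> 0 \<and> e2 \<noteq> 0 \<and>
          e1 + e2 = mat 1 \<and> l1 \<noteq> l2 \<and> l1 \<noteq> 0 \<and> l2 \<noteq> 0 \<and> l1 + l2 \<noteq> 0 \<and>
          M = {msmult c (msmult l1 e1 + msmult l2 e2) + e1 ** x ** e2 | c x. True})"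
    then show "maximal_Mathieu_subspace M"
    proof
      assume h: "F_subspace M \<and> vector_space.dim msmult M = 2 \<and> M \<subseteq> {b. trace b = 0} \<and> mat 1 \<notin> M"
      then have S: "FD.subspace M" and d2: "FD.dim M = 2" by (auto simp: F_subspace_def)
      have "nf M" using nf_sl2[OF char2, of M] h by auto
      then show ?thesis using md S d2 by simp
    next
      assume "\<exists>e1 e2 l1 l2. idempotent_mat e1 \<and> idempotent_mat e2 \<and> e1 \<noteq> 0 \<and> e2 \<noteq> 0 \<and>
          e1 + e2 = mat 1 \<and> l1 \<noteq> l2 \<and> l1 \<noteq> 0 \<and> l2 \<noteq> 0 \<and> l1 + l2 \<noteq> 0 \<and>
          M = {msmult c (msmult l1 e1 + msmult l2 e2) + e1 ** x ** e2 | c x. True}"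
      then obtain e1 e2 l1 l2 where i1: "e1 ** e1 = e1" and i2: "e2 ** e2 = e2"
        and n1: "e1 \<noteq> 0" and n2: "e2 \<noteq> 0" and s: "e1 + e2 = mat 1" and l12: "l1 \<noteq> l2"
        and l10: "l1 \<noteq> 0" and l20: "l2 \<noteq> 0" and ls: "l1 + l2 \<noteq> 0"
        and Mdef: "M = Pset e1 e2 l1 l2"
        unfolding idempotent_mat_def Pset_def by blast
      note P = P_props[OF char2 i1 i2 n1 n2 s l12 l10 l20 ls]
      have S: "FD.subspace M" and nfM: "nf M" and dge: "FD.dim M \<ge> 2" using P Mdef by auto
      have "FD.dim M \<le> 2" by (rule dim_le2[OF char2 alg_closed S nfM])
      then show ?thesis using md S nfM dge by simp
    qed
  qed
qed


end
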